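(* Let $\lambda>0$, $\beta\ge\alpha>1$ and $\gamma\ge\alpha/\beta$. Then $$\sum_{i\in\mathbb{N}}\frac{i^{-\alpha}}{(i^{-\beta}+\lambda)^\gamma}\le\lambda^{-\frac{1+\beta\gamma-\alpha}{\beta}}\,2^{1-\frac{\alpha}{\beta}}\int_0^\infty\frac{1}{1+y^\alpha}\,dy.$$ *)

theory Defs
  imports "HOL-Analysis.Analysis"
begin

end

theory Submission
  imports Defs
begin

lemma powr_concave_aux:
  fixes p :: real assumes "0 < p" "p \<le> 1"
  shows "concave_on {0<..} (\<lambda>x. x powr p)"
proof (rule f''_le0_imp_concave[where f'="\<lambda>x. p * x powr (p - 1)" and f''="\<lambda>x. p * ((p - 1) * x powr (p - 1 - 1))"])
  fix x :: real assume x: "x \<in> {0<..}"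
  show "((\<lambda>x. x powr p) has_real_derivative p * x powr (p - 1)) (at x)"
    using x by (auto intro!: derivative_eq_intros)
  show "((\<lambda>x. p * x powr (p - 1)) has_real_derivative p * ((p - 1) * x powr (p - 1 - 1))) (at x)"
    using x by (auto intro!: derivative_eq_intros)
  show "p * ((p - 1) * x powr (p - 1 - 1)) \<le> 0"
    using x assms by (intro mult_nonneg_nonpos mult_nonpos_nonneg) auto
qed auto

lemma power_mean_aux:
  fixes p u :: real assumes "0 < p" "p \<le> 1" "u > 0"
  shows "1 + u powr p \<le> 2 powr (1 - p) * (1 + u) powr p"
proof -
  have "(1 - 1/2) * 1 powr p + (1/2) * u powr p \<le> ((1 - 1/2) *\<^sub>R 1 + (1/2) *\<^sub>R u) powr p"
    by (rule concave_onD[OF powr_concave_aux[OF assms(1,2)]]) (use assms in auto)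
  then have "(1 + u powr p) / 2 \<le> ((1 + u) / 2) powr p" by (simp add: field_simps)
  also have "\<dots> = (1 + u) powr p / 2 powr p" using assms by (simp add: powr_divide)
  finally have "1 + u powr p \<le> 2 * (1 + u) powr p / 2 powr p" by (simp add: field_simps)
  also have "\<dots> = 2 powr (1 - p) * (1 + u) powr p" by (simp add: powr_diff)
  finally show ?thesis .
qed


lemma term_bound_aux:
  fixes lam alpha beta gamma x :: real
  assumes lam: "lam > 0" and a: "alpha > 1" and b: "beta \<ge> alpha" and g: "gamma \<ge> alpha / beta"
    and x: "x > 0"
  shows "x powr (-alpha) / (x powr (-beta) + lam) powr gamma
     \<le> lam powr (-((beta * gamma - alpha) / beta)) * 2 powr (1 - alpha / beta)
        / (1 + (lam powr (1 / beta) * x) powr alpha)"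
proof -
  define p where "p = alpha / beta"
  define q where "q = gamma - p"
  define u where "u = lam * x powr beta"
  have bpos: "beta > 0" using a b by linarith
  have p0: "0 < p" and p1: "p \<le> 1" using a b bpos by (auto simp: p_def field_simps)
  have q0: "q \<ge> 0" using g by (simp add: q_def p_def)
  have u0: "u > 0" using lam x by (simp add: u_def)
  have e1: "x powr (-beta) + lam = x powr (-beta) * (1 + u)"
    using x by (simp add: u_def algebra_simps powr_minus field_simps)
  have e2: "(x powr (-beta) + lam) powr gamma = x powr (-beta * gamma) * (1 + u) powr gamma"
    unfolding e1 using x u0 by (simp add: powr_mult powr_powr)
  have e3: "x powr (-alpha) / (x powr (-beta) + lam) powr gamma = x powr (beta * q) / (1 + u) powr gamma"
  proof -
    have bq: "beta * q = beta * gamma - alpha" using bpos by (simp add: q_def p_def algebra_simps)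
    show ?thesis unfolding e2 bq using x
      by (simp add: powr_diff powr_minus field_simps)
  qed
  have e4: "lam powr q * x powr (beta * q) = u powr q"
    using lam x by (simp add: u_def powr_mult powr_powr mult.commute)
  have e5: "(lam powr (1 / beta) * x) powr alpha = u powr p"
    using lam x bpos by (simp add: u_def powr_mult powr_powr p_def field_simps)
  have e6: "lam powr (-((beta * gamma - alpha) / beta)) = 1 / lam powr q"
  proof -
    have "(beta * gamma - alpha) / beta = q" using bpos by (simp add: q_def p_def diff_divide_distrib)
    then show ?thesis by (simp add: powr_minus divide_inverse)
  qed
  have "u powr q / (1 + u) powr gamma = (u / (1 + u)) powr q / (1 + u) powr p"
    using u0 by (simp add: q_def powr_divide powr_diff)
  also have "\<dots> \<le> 1 / (1 + u) powr p"
  proof -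
    have "(u / (1 + u)) powr q \<le> 1" using u0 q0 by (intro powr_le1) auto
    then show ?thesis using u0 by (intro divide_right_mono) auto
  qed
  also have "\<dots> \<le> 2 powr (1 - p) / (1 + u powr p)"
  proof -
    have pA: "0 < 1 + u powr p" by (simp add: add_pos_nonneg)
    have pB: "0 < (1 + u) powr p" using u0 by simp
    show ?thesis using power_mean_aux[OF p0 p1 u0] pA pB by (simp add: divide_simps)
  qed
  finally have main: "u powr q / (1 + u) powr gamma \<le> 2 powr (1 - p) / (1 + u powr p)" .
  have "x powr (-alpha) / (x powr (-beta) + lam) powr gamma = (u powr q / (1 + u) powr gamma) / lam powr q"
    unfolding e3 e4[symmetric] using lam by simp
  also have "\<dots> \<le> (2 powr (1 - p) / (1 + u powr p)) / lam powr q"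
    using main lam by (intro divide_right_mono) auto
  also have "\<dots> = lam powr (-((beta * gamma - alpha) / beta)) * 2 powr (1 - alpha / beta)
        / (1 + (lam powr (1 / beta) * x) powr alpha)"
    unfolding e5 e6 by (simp add: p_def)
  finally show ?thesis .
qed


lemma G_cont:
  fixes alpha :: real assumes "alpha > 0"
  shows "continuous_on {0..} (\<lambda>y::real. 1 / (1 + y powr alpha))"
proof -
  have "continuous_on {0..} (\<lambda>y::real. y powr alpha)"
    using assms by (intro continuous_on_powr') (auto intro!: continuous_intros)
  moreover have "\<forall>y\<in>{0..}. 1 + (y::real) powr alpha \<noteq> 0"
    by (metis add_pos_nonneg less_numeral_extra(1) powr_ge_zero order_less_irrefl)
  ultimately show ?thesis by (intro continuous_on_divide continuous_on_add continuous_on_const) auto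
qed

lemma G_integrable:
  fixes alpha :: real assumes a: "alpha > 1"
  shows "(\<lambda>y::real. 1 / (1 + y powr alpha)) integrable_on {0..}"
proof (rule integrable_Un')
  have c: "continuous_on {0..} (\<lambda>y::real. 1 / (1 + y powr alpha))" using G_cont a by simp
  show "(\<lambda>y::real. 1 / (1 + y powr alpha)) integrable_on {0..1}"
    by (rule integrable_continuous_interval) (rule continuous_on_subset[OF c], auto)
  show "(\<lambda>y::real. 1 / (1 + y powr alpha)) integrable_on {1..}"
  proof (rule measurable_bounded_by_integrable_imp_integrable)
    show "(\<lambda>y::real. 1 / (1 + y powr alpha)) \<in> borel_measurable (lebesgue_on {1..})"
      by (rule continuous_imp_measurable_on_sets_lebesgue) (rule continuous_on_subset[OF c], auto)
    show "(\<lambda>y::real. y powr (-alpha)) integrable_on {1..}"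
      using has_integral_powr_to_inf[of "-alpha" 1] a by (auto simp: integrable_on_def)
    show "norm (1 / (1 + y powr alpha)) \<le> y powr (-alpha)" if "y \<in> {1..}" for y :: real
    proof -
      have "y powr alpha > 0" using that by auto
      then have "1 + y powr alpha \<ge> y powr alpha" "1 + y powr alpha > 0" by linarith+
      then have "1 / (1 + y powr alpha) \<le> 1 / y powr alpha"
        using \<open>y powr alpha > 0\<close> by (intro divide_left_mono mult_pos_pos; linarith)
      moreover have "norm (1 / (1 + y powr alpha)) = 1 / (1 + y powr alpha)"
        using \<open>1 + y powr alpha > 0\<close> by simp
      ultimately show ?thesis by (simp add: powr_minus divide_inverse)
    qed
    show "{1::real..} \<in> sets lebesgue" by simp
  qed
  show "negligible ({0..1} \<inter> {1::real..})" by (simp add: Int_atLeastAtMost)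
  show "{0::real..} = {0..1} \<union> {1..}" by auto
qed


theorem lemma3:
  fixes lam alpha beta gamma :: real
  assumes "lam > 0" and "alpha > 1" and "beta \<ge> alpha" and "gamma \<ge> alpha / beta"
  shows "summable (\<lambda>n. real (Suc n) powr (-alpha) / (real (Suc n) powr (-beta) + lam) powr gamma)
    \<and> (\<Sum>n. real (Suc n) powr (-alpha) / (real (Suc n) powr (-beta) + lam) powr gamma)
      \<le> lam powr (-((1 + beta * gamma - alpha) / beta)) * 2 powr (1 - alpha / beta)
         * integral {0..} (\<lambda>y::real. 1 / (1 + y powr alpha))"
proof -
  define G where "G = (\<lambda>y::real. 1 / (1 + y powr alpha))"
  define f where "f = (\<lambda>n. real (Suc n) powr (-alpha) / (real (Suc n) powr (-beta) + lam) powr gamma)"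
  define h where "h = lam powr (1 / beta)"
  define K where "K = lam powr (-((1 + beta * gamma - alpha) / beta)) * 2 powr (1 - alpha / beta)"
  define F where "F = (\<lambda>n::nat. integral {h * real n .. h * real (Suc n)} G)"
  define I where "I = integral {0..} G"
  have bpos: "beta > 0" using assms by linarith
  have h0: "h > 0" using assms by (simp add: h_def)
  have K0: "K \<ge> 0" by (simp add: K_def)
  have Gcont: "continuous_on {0..} G" unfolding G_def using G_cont assms by simp
  have Gint: "G integrable_on {0..}" unfolding G_def using G_integrable assms by simp
  have Gnn: "G y \<ge> 0" for y by (simp add: G_def)
  have Gint_iv: "G integrable_on {a..b}" if "a \<ge> 0" for a b
    by (rule integrable_continuous_interval) (rule continuous_on_subset[OF Gcont], use that in auto)
  have Gmono: "G b \<le> G y" if "0 \<le> y" "y \<le> b" for y b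
  proof -
    have "y powr alpha \<le> b powr alpha" using that assms by (intro powr_mono2) auto
    then show ?thesis unfolding G_def by (intro divide_left_mono mult_pos_pos add_pos_nonneg) auto
  qed
  have Fnn: "F n \<ge> 0" for n unfolding F_def
    by (rule integral_nonneg) (use Gint_iv h0 Gnn in auto)
  have fnn: "f n \<ge> 0" for n unfolding f_def by simp
  have Kh: "K * h = lam powr (-((beta * gamma - alpha) / beta)) * 2 powr (1 - alpha / beta)"
  proof -
    have "K * h = lam powr (-((1 + beta * gamma - alpha) / beta) + 1 / beta) * 2 powr (1 - alpha / beta)"
      unfolding K_def h_def using powr_add[of lam "-((1 + beta * gamma - alpha) / beta)" "1 / beta"] by simp
    also have "-((1 + beta * gamma - alpha) / beta) + 1 / beta = -((beta * gamma - alpha) / beta)"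
      by (simp add: diff_divide_distrib add_divide_distrib)
    finally show ?thesis .
  qed
  have fF: "f n \<le> K * F n" for n
  proof -
    define a where "a = h * real n"
    define b where "b = h * real (Suc n)"
    have ab: "0 \<le> a" "a \<le> b" "b - a = h" using h0 by (auto simp: a_def b_def algebra_simps)
    have "f n \<le> lam powr (-((beta * gamma - alpha) / beta)) * 2 powr (1 - alpha / beta)
        / (1 + (h * real (Suc n)) powr alpha)"
      unfolding f_def h_def by (rule term_bound_aux) (use assms in auto)
    also have "\<dots> = K * (h * G b)" unfolding G_def b_def mult.assoc[symmetric] Kh by simp
    also have "h * G b \<le> F n"
    proof -
      have "integral {a..b} (\<lambda>_. G b) \<le> integral {a..b} G"
        by (rule integral_le) (use Gint_iv ab Gmono in auto)
      then show ?thesis using ab by (simp add: F_def a_def b_def)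
    qed
    then have "K * (h * G b) \<le> K * F n" using K0 by (rule mult_left_mono)
    finally show ?thesis .
  qed
  have Fsum: "sum F {..<N} = integral {0 .. h * real N} G" for N
  proof (induction N)
    case 0 then show ?case by simp
  next
    case (Suc N)
    have "integral {0 .. h * real N} G + integral {h * real N .. h * real (Suc N)} G = integral {0 .. h * real (Suc N)} G"
    proof (rule Henstock_Kurzweil_Integration.integral_combine)
      show "0 \<le> h * real N" using h0 by simp
      show "h * real N \<le> h * real (Suc N)" using h0 by simp
      show "G integrable_on {0..h * real (Suc N)}" by (rule Gint_iv) simp
    qed
    then show ?case using Suc by (simp add: F_def)
  qed
  have Fbound: "sum F {..<N} \<le> I" for N
    unfolding Fsum I_def
    by (rule integral_subset_le) (use h0 Gint_iv Gint Gnn in auto)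
  have sF: "summable F"
    by (rule summableI_nonneg_bounded[where x=I]) (use Fnn Fbound in auto)
  have sKF: "summable (\<lambda>n. K * F n)" using sF by (rule summable_mult)
  have sf: "summable f"
    by (rule summable_comparison_test[OF _ sKF]) (use fnn fF in auto)
  have "suminf f \<le> suminf (\<lambda>n. K * F n)" by (rule suminf_le) (use fF sf sKF in auto)
  also have "\<dots> = K * suminf F" using sF by (rule suminf_mult)
  also have "\<dots> \<le> K * I" using K0 by (intro mult_left_mono suminf_le_const sF Fbound)
  finally show ?thesis using sf unfolding f_def K_def I_def G_def by simp
qed

end
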